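(* For $1<p\le 2$ and $1\le q\le 2$, the pair $(\ell_p^2(\mathbb{R}),\ell_q^2(\mathbb{R}))$ fails the uniform sBPBp.
   Context: $\ell_p^2(\mathbb{R})$ denotes $\mathbb{R}^2$ with the norm $\|(x,y)\|_p=(|x|^p+|y|^p)^{1/p}$; $S_X$ is the unit sphere of $X$ and $\mathcal{L}(X,Y)$ the bounded linear operators. A pair of Banach spaces $(X,Y)$ has the uniform strong Bishop–Phelps–Bollobás property (uniform sBPBp) if for every $\varepsilon>0$ there exists $\eta(\varepsilon)>0$ such that whenever $T\in\mathcal{L}(X,Y)$ with $\|T\|=1$ and $x_0\in S_X$ satisfy $\|T(x_0)\|>1-\eta(\varepsilon)$, there exists $x_1\in S_X$ with $\|T(x_1)\|=1$ and $\|x_1-x_0\|<\varepsilon$. *)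

theory Defs
  imports "HOL-Analysis.Analysis"
begin

definition lp_norm :: "real \<Rightarrow> real \<times> real \<Rightarrow> real" where
  "lp_norm p v = (\<bar>fst v\<bar> powr p + \<bar>snd v\<bar> powr p) powr (1 / p)"

definition op_norm :: "('a \<Rightarrow> real) \<Rightarrow> ('b \<Rightarrow> real) \<Rightarrow> ('a \<Rightarrow> 'b) \<Rightarrow> real" where
  "op_norm nX nY T = Sup ((\<lambda>x. nY (T x)) ` {x. nX x = 1})"

text \<open>In the applications all spaces are
  finite-dimensional, so every linear map is bounded.\<close>
definition uniform_sBPBp ::
  "('a::real_vector \<Rightarrow> real) \<Rightarrow> ('b::real_vector \<Rightarrow> real) \<Rightarrow> bool" where
  "uniform_sBPBp nX nY \<longleftrightarrow>
     (\<forall>\<epsilon>>0. \<exists>\<eta>>0. \<forall>T x0.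
        linear T \<and> op_norm nX nY T = 1 \<and> nX x0 = 1 \<and> nY (T x0) > 1 - \<eta> \<longrightarrow>
        (\<exists>x1. nX x1 = 1 \<and> nY (T x1) = 1 \<and> nX (x1 - x0) < \<epsilon>))"

end

theory Submission
  imports Defs
begin

lemma powr_cvx:
  fixes s a b t :: real
  assumes "s \<ge> 1" "a \<ge> 0" "b \<ge> 0" "0 \<le> t" "t \<le> 1"
  shows "((1-t)*a + t*b) powr s \<le> (1-t) * a powr s + t * b powr s"
proof (cases "a = 0 \<or> b = 0")
  case True
  have key: "u powr s \<le> u" if "0 \<le> u" "u \<le> 1" for u :: real
    using that assms(1) powr_le_one_le[of u s] by (cases "u = 0") auto
  show ?thesis
  proof (cases "a = 0")
    case True
    have "(t*b) powr s = t powr s * b powr s" by (simp add: powr_mult assms)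
    also have "\<dots> \<le> t * b powr s" using key[of t] assms by (intro mult_right_mono) auto
    finally show ?thesis using True assms by simp
  next
    case False
    then have b0: "b = 0" using \<open>a = 0 \<or> b = 0\<close> by auto
    have "((1-t)*a) powr s = (1-t) powr s * a powr s" by (simp add: powr_mult assms)
    also have "\<dots> \<le> (1-t) * a powr s" using key[of "1-t"] assms by (intro mult_right_mono) auto
    finally show ?thesis using b0 assms by simp
  qed
next
  case False
  then have "a \<in> {0<..}" "b \<in> {0<..}" using assms by auto
  from convex_onD[OF powr_convex[OF assms(1)] assms(4,5) this] show ?thesis by simp
qed

lemma lp_ge_fst: "p > 0 \<Longrightarrow> \<bar>fst v\<bar> \<le> lp_norm p v"
proof -
  assume p: "p > 0"
  have "\<bar>fst v\<bar> = (\<bar>fst v\<bar> powr p) powr (1/p)" using p by (simp add: powr_powr)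
  also have "\<dots> \<le> lp_norm p v" unfolding lp_norm_def using p by (intro powr_mono2) auto
  finally show ?thesis .
qed

lemma lp_ge_snd: "p > 0 \<Longrightarrow> \<bar>snd v\<bar> \<le> lp_norm p v"
proof -
  assume p: "p > 0"
  have "\<bar>snd v\<bar> = (\<bar>snd v\<bar> powr p) powr (1/p)" using p by (simp add: powr_powr)
  also have "\<dots> \<le> lp_norm p v" unfolding lp_norm_def using p by (intro powr_mono2) auto
  finally show ?thesis .
qed

lemma lp_one_iff: "p > 0 \<Longrightarrow> lp_norm p v = 1 \<longleftrightarrow> \<bar>fst v\<bar> powr p + \<bar>snd v\<bar> powr p = 1"
proof -
  assume p: "p > 0"
  define z where "z = \<bar>fst v\<bar> powr p + \<bar>snd v\<bar> powr p"
  have z0: "z \<ge> 0" unfolding z_def by auto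
  have "z = (z powr (1/p)) powr p" using p z0 by (simp add: powr_powr)
  then show ?thesis unfolding lp_norm_def z_def[symmetric] by auto
qed

lemma lp_scale: "p > 0 \<Longrightarrow> lp_norm p (s *\<^sub>R v) = \<bar>s\<bar> * lp_norm p v"
proof -
  assume p: "p > 0"
  have "\<bar>fst (s *\<^sub>R v)\<bar> powr p + \<bar>snd (s *\<^sub>R v)\<bar> powr p
        = \<bar>s\<bar> powr p * (\<bar>fst v\<bar> powr p + \<bar>snd v\<bar> powr p)"
    by (simp add: abs_mult powr_mult distrib_left)
  then have "lp_norm p (s *\<^sub>R v) = (\<bar>s\<bar> powr p) powr (1/p) * lp_norm p v"
    unfolding lp_norm_def by (simp add: powr_mult)
  also have "(\<bar>s\<bar> powr p) powr (1/p) = \<bar>s\<bar>" using p by (simp add: powr_powr)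
  finally show ?thesis .
qed

lemma lp_nonneg: "lp_norm p v \<ge> 0" unfolding lp_norm_def by simp


lemma caseA:
  fixes p q :: real
  assumes p1: "1 < p" and pq: "p \<le> q"
  shows "\<not> uniform_sBPBp (lp_norm p) (lp_norm q)"
proof
  assume U: "uniform_sBPBp (lp_norm p) (lp_norm q)"
  have p0: "p > 0" and q0: "q > 0" using p1 pq by auto
  obtain \<eta> where eta: "\<eta> > 0" and H: "\<And>T x0. linear T \<and> op_norm (lp_norm p) (lp_norm q) T = 1 \<and>
      lp_norm p x0 = 1 \<and> lp_norm q (T x0) > 1 - \<eta> \<Longrightarrow>
      (\<exists>x1. lp_norm p x1 = 1 \<and> lp_norm q (T x1) = 1 \<and> lp_norm p (x1 - x0) < 1/2)"
  proof -
    have "\<exists>\<eta>>0. \<forall>T x0. linear T \<and> op_norm (lp_norm p) (lp_norm q) T = 1 \<and>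
      lp_norm p x0 = 1 \<and> lp_norm q (T x0) > 1 - \<eta> \<longrightarrow>
      (\<exists>x1. lp_norm p x1 = 1 \<and> lp_norm q (T x1) = 1 \<and> lp_norm p (x1 - x0) < 1/2)"
      using U unfolding uniform_sBPBp_def by (drule_tac x="1/2" in spec) simp
    then show ?thesis using that by blast
  qed
  define c where "c = 1 - min \<eta> 1 / 2"
  have c: "1/2 \<le> c" "c < 1" using eta unfolding c_def by auto
  define T where "T = (\<lambda>v::real\<times>real. (fst v, c * snd v))"
  have lin: "linear T" unfolding T_def by (intro linearI) (auto simp: algebra_simps)
  have bound: "lp_norm q (T v) \<le> 1" if v: "lp_norm p v = 1" for v
  proof -
    have sv: "\<bar>fst v\<bar> powr p + \<bar>snd v\<bar> powr p = 1" using v lp_one_iff[OF p0] by auto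
    have x1: "\<bar>fst v\<bar> \<le> 1" using lp_ge_fst[OF p0, of v] v by auto
    have y1: "\<bar>snd v\<bar> \<le> 1" using lp_ge_snd[OF p0, of v] v by auto
    have "\<bar>fst v\<bar> powr q \<le> \<bar>fst v\<bar> powr p" using x1 pq by (intro powr_mono') auto
    moreover have "\<bar>c * snd v\<bar> powr q \<le> \<bar>snd v\<bar> powr p"
    proof -
      have "\<bar>c * snd v\<bar> powr q \<le> \<bar>snd v\<bar> powr q"
        using c q0 by (intro powr_mono2) (auto simp: abs_mult mult_left_le_one_le)
      also have "\<dots> \<le> \<bar>snd v\<bar> powr p" using y1 pq by (intro powr_mono') auto
      finally show ?thesis .
    qed
    ultimately have "\<bar>fst v\<bar> powr q + \<bar>c * snd v\<bar> powr q \<le> 1" using sv by linarith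
    then have "(\<bar>fst v\<bar> powr q + \<bar>c * snd v\<bar> powr q) powr (1/q) \<le> 1 powr (1/q)"
      using q0 by (intro powr_mono2) auto
    then show ?thesis unfolding lp_norm_def T_def by simp
  qed
  have e1: "lp_norm p (1,0) = 1" using lp_one_iff[OF p0, of "(1,0)"] p0 by simp
  have e2: "lp_norm q (T (1,0)) = 1" using lp_one_iff[OF q0, of "(1,0)"] q0 by (simp add: T_def)
  have opn: "op_norm (lp_norm p) (lp_norm q) T = 1"
    unfolding op_norm_def
    by (rule cSup_eq_maximum) (use e1 e2 bound in force)+
  have x0: "lp_norm p (0,1) = 1" using lp_one_iff[OF p0, of "(0,1)"] p0 by simp
  have Tx0: "lp_norm q (T (0,1)) = c"
  proof -
    have "T (0,1) = c *\<^sub>R (0,1)" by (simp add: T_def)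
    then have "lp_norm q (T (0,1)) = \<bar>c\<bar> * lp_norm q (0,1)" using lp_scale[OF q0, of c "(0,1)"] by simp
    moreover have "lp_norm q (0,1) = 1" using lp_one_iff[OF q0, of "(0,1)"] q0 by simp
    ultimately show ?thesis using c by simp
  qed
  have "c > 1 - \<eta>" unfolding c_def using eta by auto
  then obtain x1 where x1: "lp_norm p x1 = 1" "lp_norm q (T x1) = 1" "lp_norm p (x1 - (0,1)) < 1/2"
    using H[of T "(0,1)"] lin opn x0 Tx0 by auto
  have sv: "\<bar>fst x1\<bar> powr p + \<bar>snd x1\<bar> powr p = 1" using x1(1) lp_one_iff[OF p0] by auto
  have st: "\<bar>fst x1\<bar> powr q + \<bar>c * snd x1\<bar> powr q = 1"
    using x1(2) lp_one_iff[OF q0, of "T x1"] by (simp add: T_def)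
  have xb: "\<bar>fst x1\<bar> \<le> 1" using lp_ge_fst[OF p0, of x1] x1 by auto
  have yb: "\<bar>snd x1\<bar> \<le> 1" using lp_ge_snd[OF p0, of x1] x1 by auto
  have y0: "snd x1 = 0"
  proof (rule ccontr)
    assume "snd x1 \<noteq> 0"
    then have "\<bar>c * snd x1\<bar> powr q < \<bar>snd x1\<bar> powr q"
      using c q0 by (intro powr_less_mono2) (auto simp: abs_mult)
    also have "\<dots> \<le> \<bar>snd x1\<bar> powr p" using yb pq by (intro powr_mono') auto
    finally have "\<bar>c * snd x1\<bar> powr q < \<bar>snd x1\<bar> powr p" .
    moreover have "\<bar>fst x1\<bar> powr q \<le> \<bar>fst x1\<bar> powr p" using xb pq by (intro powr_mono') auto
    ultimately show False using sv st by linarith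
  qed
  then have "\<bar>fst x1\<bar> powr p = 1" using sv by simp
  then have "(\<bar>fst x1\<bar> powr p) powr (1/p) = 1" by simp
  then have "\<bar>fst x1\<bar> = 1" using p0 by (simp add: powr_powr)
  then have "1 \<le> lp_norm p (x1 - (0,1))" using lp_ge_fst[OF p0, of "x1 - (0,1)"] by simp
  then show False using x1(3) by simp
qed

lemma caseB:
  fixes p q :: real
  assumes q1: "1 \<le> q" and qp: "q < p"
  shows "\<not> uniform_sBPBp (lp_norm p) (lp_norm q)"
proof
  assume U: "uniform_sBPBp (lp_norm p) (lp_norm q)"
  have p0: "p > 0" and q0: "q > 0" and p1: "p > 1" using q1 qp by auto
  obtain \<eta> where eta: "\<eta> > 0" and H: "\<And>T x0. linear T \<and> op_norm (lp_norm p) (lp_norm q) T = 1 \<and>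
      lp_norm p x0 = 1 \<and> lp_norm q (T x0) > 1 - \<eta> \<Longrightarrow>
      (\<exists>x1. lp_norm p x1 = 1 \<and> lp_norm q (T x1) = 1 \<and> lp_norm p (x1 - x0) < 1/2)"
  proof -
    have "\<exists>\<eta>>0. \<forall>T x0. linear T \<and> op_norm (lp_norm p) (lp_norm q) T = 1 \<and>
      lp_norm p x0 = 1 \<and> lp_norm q (T x0) > 1 - \<eta> \<longrightarrow>
      (\<exists>x1. lp_norm p x1 = 1 \<and> lp_norm q (T x1) = 1 \<and> lp_norm p (x1 - x0) < 1/2)"
      using U unfolding uniform_sBPBp_def by (drule_tac x="1/2" in spec) simp
    then show ?thesis using that by blast
  qed
  define c where "c = min \<eta> 1 / 4"
  have c: "0 < c" "c \<le> 1/4" "2 * c < \<eta>" using eta unfolding c_def by auto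
  define a where "a = 2 powr (-1/p)"
  have a0: "a > 0" unfolding a_def by simp
  have ap: "a powr p = 1/2"
  proof -
    have "a powr p = 2 powr ((-1/p) * p)" unfolding a_def by (simp only: powr_powr)
    also have "(-1/p) * p = -1" using p0 by simp
    finally show ?thesis by (simp add: powr_minus)
  qed
  have ah: "a \<ge> 1/2"
  proof -
    have "2 powr (-1) \<le> 2 powr (-1/p)" using p1 by (intro powr_mono) (auto simp: field_simps)
    then show ?thesis unfolding a_def by (simp add: powr_minus)
  qed
  define x0 where "x0 = (a, -a)"
  have x0n: "lp_norm p x0 = 1" using lp_one_iff[OF p0, of x0] a0 ap by (simp add: x0_def)
  define K where "K = lp_norm q x0"
  have K0: "K > 0"
  proof -
    have "a \<le> K" using lp_ge_fst[OF q0, of x0] a0 unfolding K_def x0_def by simp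
    then show ?thesis using a0 by simp
  qed
  define S where "S = {v::real\<times>real. lp_norm p v = 1}"
  \<comment> \<open>power mean: unit vectors have q-norm at most K\<close>
  have pm: "lp_norm q v \<le> K" if v: "v \<in> S" for v
  proof -
    define u where "u = \<bar>fst v\<bar> powr q"
    define w where "w = \<bar>snd v\<bar> powr q"
    have u0: "u \<ge> 0" and w0: "w \<ge> 0" unfolding u_def w_def by auto
    have sv: "\<bar>fst v\<bar> powr p + \<bar>snd v\<bar> powr p = 1" using v lp_one_iff[OF p0] unfolding S_def by auto
    have uu: "u powr (p/q) = \<bar>fst v\<bar> powr p" unfolding u_def using q0 by (simp add: powr_powr)
    have ww: "w powr (p/q) = \<bar>snd v\<bar> powr p" unfolding w_def using q0 by (simp add: powr_powr)
    have "((1 - 1/2) * u + (1/2) * w) powr (p/q) \<le> (1 - 1/2) * u powr (p/q) + (1/2) * w powr (p/q)"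
      using qp q0 u0 w0 by (intro powr_cvx) auto
    then have "((u + w)/2) powr (p/q) \<le> 1/2" using uu ww sv by (simp add: field_simps)
    then have "(((u + w)/2) powr (p/q)) powr (q/p) \<le> (1/2) powr (q/p)"
      using p0 q0 by (intro powr_mono2) auto
    then have "(u + w)/2 \<le> (1/2) powr (q/p)" using p0 q0 u0 w0 by (simp add: powr_powr)
    moreover have "a powr q = (1/2) powr (q/p)"
    proof -
      have "(a powr p) powr (q/p) = a powr q" using p0 by (simp add: powr_powr)
      then show ?thesis using ap by simp
    qed
    ultimately have "u + w \<le> \<bar>a\<bar> powr q + \<bar>-a\<bar> powr q" using a0 by simp
    then show ?thesis unfolding K_def lp_norm_def x0_def u_def w_def
      using q0 by (intro powr_mono2) auto
  qed
  define Tc where "Tc = (\<lambda>v::real\<times>real. (fst v + c * snd v, snd v + c * fst v))"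
  have linTc: "linear Tc" unfolding Tc_def by (intro linearI) (auto simp: algebra_simps)
  have tri: "lp_norm q (Tc v) \<le> (1 + c) * lp_norm q v" for v
  proof -
    define x where "x = \<bar>fst v\<bar>"
    define y where "y = \<bar>snd v\<bar>"
    have x0': "x \<ge> 0" "y \<ge> 0" unfolding x_def y_def by auto
    have g: "\<bar>s + c * t\<bar> powr q \<le> (1 + c) powr q * ((1 / (1+c)) * \<bar>s\<bar> powr q + (c/(1+c)) * \<bar>t\<bar> powr q)"
      for s t :: real
    proof -
      have "\<bar>s + c * t\<bar> powr q \<le> (\<bar>s\<bar> + c * \<bar>t\<bar>) powr q"
        using c q0 by (intro powr_mono2) (auto simp: abs_mult intro: order.trans[OF abs_triangle_ineq])
      also have "\<bar>s\<bar> + c * \<bar>t\<bar> = (1+c) * ((1 - c/(1+c)) * \<bar>s\<bar> + (c/(1+c)) * \<bar>t\<bar>)"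
      proof -
        have e: "1 - c/(1+c) = 1/(1+c)" using c by (simp add: field_simps)
        have "(1+c) * ((1/(1+c)) * \<bar>s\<bar> + (c/(1+c)) * \<bar>t\<bar>) = \<bar>s\<bar> + c * \<bar>t\<bar>"
          using c by (simp add: distrib_left)
        then show ?thesis by (simp only: e)
      qed
      also have "((1+c) * ((1 - c/(1+c)) * \<bar>s\<bar> + (c/(1+c)) * \<bar>t\<bar>)) powr q
          = (1+c) powr q * ((1 - c/(1+c)) * \<bar>s\<bar> + (c/(1+c)) * \<bar>t\<bar>) powr q"
        by (rule powr_mult)
      also have "\<dots> \<le> (1+c) powr q * ((1 - c/(1+c)) * \<bar>s\<bar> powr q + (c/(1+c)) * \<bar>t\<bar> powr q)"
        using c q1 by (intro mult_left_mono powr_cvx) (auto simp: field_simps)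
      also have "1 - c/(1+c) = 1/(1+c)" using c by (simp add: field_simps)
      finally show ?thesis .
    qed
    have "\<bar>fst (Tc v)\<bar> powr q + \<bar>snd (Tc v)\<bar> powr q \<le>
        (1 + c) powr q * ((1 / (1+c)) * \<bar>fst v\<bar> powr q + (c/(1+c)) * \<bar>snd v\<bar> powr q)
      + (1 + c) powr q * ((1 / (1+c)) * \<bar>snd v\<bar> powr q + (c/(1+c)) * \<bar>fst v\<bar> powr q)"
      unfolding Tc_def using g[of "fst v" "snd v"] g[of "snd v" "fst v"] by simp
    also have "\<dots> = (1 + c) powr q * (\<bar>fst v\<bar> powr q + \<bar>snd v\<bar> powr q)"
    proof -
      have h: "1/(1+c) + c/(1+c) = 1" using c by (simp add: add_divide_distrib[symmetric])
      have g2: "M*(u*A + w*B) + M*(u*B + w*A) = M*((u+w)*A + (u+w)*B)" for M u w A B :: real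
        by (simp add: algebra_simps)
      show ?thesis unfolding g2 h by simp
    qed
    finally have "(\<bar>fst (Tc v)\<bar> powr q + \<bar>snd (Tc v)\<bar> powr q) powr (1/q) \<le>
        ((1 + c) powr q * (\<bar>fst v\<bar> powr q + \<bar>snd v\<bar> powr q)) powr (1/q)"
      using q0 by (intro powr_mono2) auto
    also have "\<dots> = (1+c) * lp_norm q v"
      unfolding lp_norm_def using c q0 by (simp add: powr_mult powr_powr)
    finally show ?thesis unfolding lp_norm_def .
  qed
  define f where "f = (\<lambda>v. lp_norm q (Tc v))"
  have fb: "f v \<le> (1 + c) * K" if "v \<in> S" for v
  proof -
    have "(1 + c) * lp_norm q v \<le> (1 + c) * K" using pm[OF that] c by (intro mult_left_mono) auto
    then show ?thesis using tri[of v] unfolding f_def by linarith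
  qed
  have bdd: "bdd_above (f ` S)" unfolding bdd_above_def using fb by blast
  have x0S: "x0 \<in> S" using x0n unfolding S_def by simp
  define N where "N = Sup (f ` S)"
  have fx0: "f x0 = (1 - c) * K"
  proof -
    have "Tc x0 = (1 - c) *\<^sub>R x0" unfolding Tc_def x0_def by (simp add: algebra_simps)
    then show ?thesis unfolding f_def K_def using lp_scale[OF q0, of "1-c" x0] c by simp
  qed
  have fN: "f v \<le> N" if "v \<in> S" for v unfolding N_def using bdd that by (intro cSup_upper) auto
  have N1: "(1 - c) * K \<le> N" using fN[OF x0S] fx0 by simp
  have N2: "N \<le> (1 + c) * K" unfolding N_def using x0S fb by (intro cSup_least) auto
  have N0: "N > 0"
  proof -
    have "(1 - c) * K > 0" using K0 c by (intro mult_pos_pos) auto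
    then show ?thesis using N1 by linarith
  qed
  define T where "T = (\<lambda>v. (1/N) *\<^sub>R Tc v)"
  have linT: "linear T" unfolding T_def Tc_def by (intro linearI) (auto simp: algebra_simps)
  have Tn: "lp_norm q (T v) = f v / N" for v
    unfolding T_def f_def using lp_scale[OF q0, of "1/N" "Tc v"] N0 by simp
  have opn: "op_norm (lp_norm p) (lp_norm q) T = 1"
  proof -
    have img: "(\<lambda>x. lp_norm q (T x)) ` {x. lp_norm p x = 1} = (\<lambda>t. t / N) ` (f ` S)"
      unfolding S_def Tn by auto
    have b2: "bdd_above ((\<lambda>t. t / N) ` (f ` S))"
      unfolding bdd_above_def using fN N0 by (auto simp: divide_le_eq_1 intro!: exI[of _ 1])
    have le: "Sup ((\<lambda>t. t / N) ` (f ` S)) \<le> 1"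
      using x0S fN N0 by (intro cSup_least) (auto simp: divide_le_eq_1)
    have ge: "1 \<le> Sup ((\<lambda>t. t / N) ` (f ` S))"
    proof (rule ccontr)
      assume "\<not> ?thesis"
      then have lt: "Sup ((\<lambda>t. t / N) ` (f ` S)) < 1" by simp
      have "f v \<le> Sup ((\<lambda>t. t / N) ` (f ` S)) * N" if "v \<in> S" for v
      proof -
        have "f v / N \<le> Sup ((\<lambda>t. t / N) ` (f ` S))" using b2 that by (intro cSup_upper) auto
        then show ?thesis using N0 by (simp add: divide_le_eq)
      qed
      then have "N \<le> Sup ((\<lambda>t. t / N) ` (f ` S)) * N"
        unfolding N_def using x0S by (intro cSup_least) (auto simp: N_def)
      then show False using lt N0 by simp
    qed
    show ?thesis unfolding op_norm_def img using le ge by simp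
  qed
  have Tx0: "lp_norm q (T x0) > 1 - \<eta>"
  proof -
    have "(1 - c) * K / ((1 + c) * K) \<le> (1 - c) * K / N"
      using N2 N0 K0 c by (intro divide_left_mono mult_pos_pos mult_nonneg_nonneg) auto
    moreover have "(1 - c) * K / ((1 + c) * K) = (1 - c) / (1 + c)" using K0 by simp
    ultimately have A: "(1 - c) / (1 + c) \<le> lp_norm q (T x0)" unfolding Tn fx0 by simp
    have "(1 - 2*c) * (1 + c) = 1 - c - 2 * (c * c)" by (simp add: algebra_simps)
    moreover have "c * c \<ge> 0" by simp
    ultimately have "(1 - 2*c) * (1 + c) \<le> 1 - c" by linarith
    then have "1 - 2*c \<le> (1 - c) / (1 + c)" using c by (simp add: le_divide_eq)
    moreover have "1 - \<eta> < 1 - 2*c" using c by linarith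
    ultimately have "1 - \<eta> < (1 - c) / (1 + c)" by linarith
    then show ?thesis using A by linarith
  qed
  obtain x1 where x1: "lp_norm p x1 = 1" "lp_norm q (T x1) = 1" "lp_norm p (x1 - x0) < 1/2"
    using H[of T x0] linT opn x0n Tx0 by auto
  have fx1: "f x1 = N" using x1(2) Tn[of x1] N0 by simp
  have d1: "\<bar>fst x1 - a\<bar> < 1/2" using lp_ge_fst[OF p0, of "x1 - x0"] x1(3) by (simp add: x0_def)
  have d2: "\<bar>snd x1 + a\<bar> < 1/2" using lp_ge_snd[OF p0, of "x1 - x0"] x1(3) by (simp add: x0_def)
  have xp: "fst x1 > 0" using d1 ah by linarith
  have yn: "snd x1 < 0" using d2 ah by linarith
  define x1' where "x1' = (fst x1, - snd x1)"
  have x1'S: "x1' \<in> S" using x1(1) unfolding S_def lp_norm_def x1'_def by simp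
  have "f x1 < f x1'"
  proof -
    have cy: "c * snd x1 < 0" using c yn by (simp add: mult_pos_neg)
    have cx: "c * fst x1 > 0" using c xp by simp
    have s1: "\<bar>fst x1 + c * snd x1\<bar> powr q < \<bar>fst x1 + c * (- snd x1)\<bar> powr q"
      using xp yn cy cx q0 by (intro powr_less_mono2) (auto simp: abs_if)
    have s2: "\<bar>snd x1 + c * fst x1\<bar> powr q < \<bar>- snd x1 + c * fst x1\<bar> powr q"
      using xp yn cy cx q0 by (intro powr_less_mono2) (auto simp: abs_if)
    have "(\<bar>fst x1 + c * snd x1\<bar> powr q + \<bar>snd x1 + c * fst x1\<bar> powr q) powr (1/q) <
          (\<bar>fst x1 + c * (- snd x1)\<bar> powr q + \<bar>- snd x1 + c * fst x1\<bar> powr q) powr (1/q)"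
      using s1 s2 q0 by (intro powr_less_mono2) auto
    then show ?thesis unfolding f_def lp_norm_def Tc_def x1'_def by simp
  qed
  then show False using fN[OF x1'S] fx1 by simp
qed

theorem mainTheorem11:
  fixes p q :: real
  assumes "1 < p" "p \<le> 2" "1 \<le> q" "q \<le> 2"
  shows "\<not> uniform_sBPBp (lp_norm p) (lp_norm q)"
proof (cases "p \<le> q")
  case True
  then show ?thesis using caseA assms by blast
next
  case False
  then show ?thesis using caseB assms by auto
qed

end
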